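(* Let $k,n\in\mathbb{N}$, let $w\in\mathbb{R}^+$, let $f,g:\mathbb{N}\to\mathbb{R}^+$ be increasing functions, and let $\mathcal{H}$ be a class of graphs such that $\widehat{\mathcal{H}}$ admits $(f,g)$-fan-partitions. Let $G$ be an $n$-vertex graph with a star-decomposition $(B_s:s\in V(S))$ of adhesion at most $k$ such that, if $r$ is the centre of the star $S$, then $\langle B_r\rangle_G\in\mathcal{H}$, and $|B_s\setminus B_r|\leq w$ for every $s\in V(S)\setminus\{r\}$. Then there exists $X\subseteq V(G)$ with $|X|\leq f(kn)$ such that $G-X$ admits a path-partition of width at most $\max(2g(kn),w)$.
   Context: $\mathbb{R}^+$ is the set of strictly positive reals, $\mathbb{N}=\{1,2,\dots\}$; $f$ is increasing if $n<m$ implies $f(n)<f(m)$. A class of graphs is closed under isomorphism. For a class $\mathcal{H}$, $\widehat{\mathcal{H}}$ denotes the class of graphs $G$ having a set $Z\subseteq V(G)$ of degree-$1$ vertices of $G$ with $G-Z\in\mathcal{H}$. A tree-decomposition of $G$ is a family $(B_t\subseteq V(G):t\in V(T))$ indexed by a tree $T$ such that for each $v\in V(G)$ the set $\{t:v\in B_t\}$ induces a nonempty subtree of $T$, and each edge of $G$ has both ends in some $B_t$. It is a star-decomposition if $T$ is a star (a tree with a vertex, the centre, adjacent to all others). Its adhesion is $\max_{tt'\in E(T)}|B_t\cap B_{t'}|$. The torso $\langle B_t\rangle_G$ is obtained from $G[B_t]$ by adding an edge $uv$ whenever $u,v\in B_t\cap B_{t'}$ for some $tt'\in E(T)$. A partition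 of $G$ is a collection of pairwise disjoint (possibly empty) subsets of $V(G)$ with union $V(G)$; its width is its largest part size; it is a path-partition if its quotient (parts as vertices, adjacent when joined by an edge of $G$) is isomorphic to a subgraph of a path. A $(k,w)$-fan-partition of $G$ is a partition with a part $P$, $|P|\leq k$, such that the remaining parts form a path-partition of $G-P$ of width at most $w$. A class $\mathcal{G}$ admits $(f,g)$-fan-partitions if every $G\in\mathcal{G}$ admits an $(f(|V(G)|),g(|V(G)|))$-fan-partition. *)

theory Defs
  imports Complex_Main
begin

(* A (finite simple) graph: vertex set and set of 2-element edges. Vertices are natural numbers;
   every finite graph is isomorphic to one of this form. *)
type_synonym graph = "nat set \<times> nat set set"

definition verts :: "graph \<Rightarrow> nat set" where "verts G = fst G"
definition edges :: "graph \<Rightarrow> nat set set" where "edges G = snd G"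

definition is_graph :: "graph \<Rightarrow> bool" where
  "is_graph G \<longleftrightarrow> finite (verts G) \<and>
     (\<forall>e\<in>edges G. \<exists>u v. e = {u, v} \<and> u \<noteq> v \<and> u \<in> verts G \<and> v \<in> verts G)"

definition graph_iso :: "graph \<Rightarrow> graph \<Rightarrow> bool" where
  "graph_iso G H \<longleftrightarrow> (\<exists>\<phi>. bij_betw \<phi> (verts G) (verts H) \<and>
     (\<forall>u\<in>verts G. \<forall>v\<in>verts G. {u, v} \<in> edges G \<longleftrightarrow> {\<phi> u, \<phi> v} \<in> edges H))"

definition graph_class :: "(graph \<Rightarrow> bool) \<Rightarrow> bool" where
  "graph_class C \<longleftrightarrow> (\<forall>G. C G \<longrightarrow> is_graph G) \<and>
     (\<forall>G H. C G \<longrightarrow> is_graph H \<longrightarrow> graph_iso G H \<longrightarrow> C H)"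

definition degree :: "graph \<Rightarrow> nat \<Rightarrow> nat" where
  "degree G v = card {u \<in> verts G. {v, u} \<in> edges G}"

definition del_verts :: "graph \<Rightarrow> nat set \<Rightarrow> graph" where
  "del_verts G X = (verts G - X, {e \<in> edges G. e \<inter> X = {}})"

definition hat_class :: "(graph \<Rightarrow> bool) \<Rightarrow> graph \<Rightarrow> bool" where
  "hat_class C G \<longleftrightarrow> is_graph G \<and>
     (\<exists>Z \<subseteq> verts G. (\<forall>z\<in>Z. degree G z = 1) \<and> C (del_verts G Z))"

(* partitions: pairwise disjoint, possibly empty, subsets with union V(G) *)
definition is_partition :: "graph \<Rightarrow> nat set set \<Rightarrow> bool" where
  "is_partition G \<P> \<longleftrightarrow> (\<forall>P\<in>\<P>. \<forall>Q\<in>\<P>. P \<noteq> Q \<longrightarrow> P \<inter> Q = {}) \<and> \<Union>\<P> = verts G"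

definition width_le :: "nat set set \<Rightarrow> real \<Rightarrow> bool" where
  "width_le \<P> w \<longleftrightarrow> (\<forall>P\<in>\<P>. real (card P) \<le> w)"

definition parts_adjacent :: "graph \<Rightarrow> nat set \<Rightarrow> nat set \<Rightarrow> bool" where
  "parts_adjacent G P Q \<longleftrightarrow> P \<noteq> Q \<and> (\<exists>u\<in>P. \<exists>v\<in>Q. {u, v} \<in> edges G)"

(* the quotient is isomorphic to a subgraph of a path: the parts embed injectively into
   the vertices 0,1,2,... of a path so that adjacent parts go to consecutive vertices *)
definition is_path_partition :: "graph \<Rightarrow> nat set set \<Rightarrow> bool" where
  "is_path_partition G \<P> \<longleftrightarrow> is_partition G \<P> \<and>
     (\<exists>\<phi> :: nat set \<Rightarrow> nat. inj_on \<phi> \<P> \<and>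
        (\<forall>P\<in>\<P>. \<forall>Q\<in>\<P>. parts_adjacent G P Q \<longrightarrow>
            \<phi> P = Suc (\<phi> Q) \<or> \<phi> Q = Suc (\<phi> P)))"

definition has_path_partition_width :: "graph \<Rightarrow> real \<Rightarrow> bool" where
  "has_path_partition_width G w \<longleftrightarrow> (\<exists>\<P>. is_path_partition G \<P> \<and> width_le \<P> w)"

definition has_fan_partition :: "graph \<Rightarrow> real \<Rightarrow> real \<Rightarrow> bool" where
  "has_fan_partition G k w \<longleftrightarrow> (\<exists>\<P> P. is_partition G \<P> \<and> P \<in> \<P> \<and> real (card P) \<le> k \<and>
      is_path_partition (del_verts G P) (\<P> - {P}) \<and> width_le (\<P> - {P}) w)"

(* f,g are defined on \<nat> = {1,2,...}, so the condition is imposed on graphs with \<ge> 1 vertex *)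
definition admits_fan_partitions :: "(graph \<Rightarrow> bool) \<Rightarrow> (nat \<Rightarrow> real) \<Rightarrow> (nat \<Rightarrow> real) \<Rightarrow> bool" where
  "admits_fan_partitions C f g \<longleftrightarrow>
     (\<forall>G. C G \<longrightarrow> card (verts G) \<ge> 1 \<longrightarrow>
        has_fan_partition G (f (card (verts G))) (g (card (verts G))))"

definition pos_increasing :: "(nat \<Rightarrow> real) \<Rightarrow> bool" where
  "pos_increasing f \<longleftrightarrow> (\<forall>m. 1 \<le> m \<longrightarrow> f m > 0) \<and> (\<forall>m m'. 1 \<le> m \<longrightarrow> m < m' \<longrightarrow> f m < f m')"

definition connected_in :: "'b set set \<Rightarrow> 'b set \<Rightarrow> bool" where
  "connected_in ET S \<longleftrightarrow> (\<forall>x\<in>S. \<forall>y\<in>S. (\<lambda>a b. a \<in> S \<and> b \<in> S \<and> {a, b} \<in> ET)\<^sup>*\<^sup>* x y)"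

definition is_star :: "'b set \<Rightarrow> 'b set set \<Rightarrow> 'b \<Rightarrow> bool" where
  "is_star VT ET r \<longleftrightarrow> finite VT \<and> r \<in> VT \<and> ET = {{r, s} | s. s \<in> VT \<and> s \<noteq> r}"

definition is_tree_decomposition :: "graph \<Rightarrow> 'b set \<Rightarrow> 'b set set \<Rightarrow> ('b \<Rightarrow> nat set) \<Rightarrow> bool" where
  "is_tree_decomposition G VT ET B \<longleftrightarrow>
     (\<forall>t\<in>VT. B t \<subseteq> verts G) \<and>
     (\<forall>v\<in>verts G. {t \<in> VT. v \<in> B t} \<noteq> {} \<and> connected_in ET {t \<in> VT. v \<in> B t}) \<and>
     (\<forall>e\<in>edges G. \<exists>t\<in>VT. e \<subseteq> B t)"

definition is_star_decomposition :: "graph \<Rightarrow> 'b set \<Rightarrow> 'b set set \<Rightarrow> 'b \<Rightarrow> ('b \<Rightarrow> nat set) \<Rightarrow> bool" where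
  "is_star_decomposition G VS ES r B \<longleftrightarrow> is_star VS ES r \<and> is_tree_decomposition G VS ES B"

definition adhesion_le :: "'b set set \<Rightarrow> ('b \<Rightarrow> nat set) \<Rightarrow> nat \<Rightarrow> bool" where
  "adhesion_le ET B k \<longleftrightarrow> (\<forall>t t'. {t, t'} \<in> ET \<longrightarrow> card (B t \<inter> B t') \<le> k)"

definition torso :: "graph \<Rightarrow> 'b set set \<Rightarrow> ('b \<Rightarrow> nat set) \<Rightarrow> 'b \<Rightarrow> graph" where
  "torso G ET B t = (B t,
     {e \<in> edges G. e \<subseteq> B t} \<union>
     {{u, v} | u v t'. u \<noteq> v \<and> {t, t'} \<in> ET \<and> u \<in> B t \<inter> B t' \<and> v \<in> B t \<inter> B t'})"

end

theory Submission
  imports Defs "HOL-Library.Nat_Bijection"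
begin


lemma verts_del[simp]: "verts (del_verts G X) = verts G - X"
  unfolding del_verts_def verts_def by simp
lemma edges_del[simp]: "edges (del_verts G X) = {e \<in> edges G. e \<inter> X = {}}"
  unfolding del_verts_def edges_def by simp

lemma div2_close: "(a::nat) \<le> b + 2 \<Longrightarrow> b \<le> a + 2 \<Longrightarrow> a div 2 \<le> Suc (b div 2) \<and> b div 2 \<le> Suc (a div 2)"
  by linarith

lemma pos_inc_mono:
  assumes "pos_increasing f" "1 \<le> m" "m \<le> m'" shows "f m \<le> f m'"
  using assms unfolding pos_increasing_def by (cases "m = m'") (auto intro: less_imp_le)

lemma label_pp:
  fixes G0 :: graph and lab :: "nat \<Rightarrow> nat"
  assumes edge: "\<And>x y. {x,y} \<in> edges G0 \<Longrightarrow> x \<in> verts G0 \<Longrightarrow> y \<in> verts G0 \<Longrightarrow> lab x \<le> Suc (lab y) \<and> lab y \<le> Suc (lab x)"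
    and cls: "\<And>i. real (card {x \<in> verts G0. lab x = i}) \<le> W"
  shows "has_path_partition_width G0 W"
proof -
  define V where "V = verts G0"
  define cl where "cl x = {y \<in> V. lab y = lab x}" for x
  define PP where "PP = cl ` V"
  define phi where "phi Q = lab (SOME y. y \<in> Q)" for Q :: "nat set"
  have phicl: "phi (cl x) = lab x" if "x \<in> V" for x
  proof -
    have "\<exists>y. y \<in> cl x" using that unfolding cl_def by auto
    then have "(SOME y. y \<in> cl x) \<in> cl x" by (rule someI_ex)
    then show ?thesis unfolding phi_def cl_def by simp
  qed
  have part: "is_partition G0 PP"
    unfolding is_partition_def PP_def cl_def V_def by auto
  have inj: "inj_on phi PP"
  proof (rule inj_onI)
    fix P Q assume "P \<in> PP" "Q \<in> PP" "phi P = phi Q"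
    then obtain a b where "a \<in> V" "b \<in> V" "P = cl a" "Q = cl b" "phi (cl a) = phi (cl b)" unfolding PP_def by auto
    then show "P = Q" using phicl unfolding cl_def by auto
  qed
  have adj: "\<forall>P\<in>PP. \<forall>Q\<in>PP. parts_adjacent G0 P Q \<longrightarrow> phi P = Suc (phi Q) \<or> phi Q = Suc (phi P)"
  proof (intro ballI impI)
    fix P Q assume "P \<in> PP" "Q \<in> PP" "parts_adjacent G0 P Q"
    then obtain a b where ab: "a \<in> V" "b \<in> V" "P = cl a" "Q = cl b" unfolding PP_def by auto
    from \<open>parts_adjacent G0 P Q\<close> obtain u v where uv: "P \<noteq> Q" "u \<in> P" "v \<in> Q" "{u,v} \<in> edges G0"
      unfolding parts_adjacent_def by auto
    have "lab u = lab a" "lab v = lab b" "u \<in> V" "v \<in> V" using uv ab unfolding cl_def by auto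
    moreover have "lab a \<noteq> lab b" using uv ab unfolding cl_def by auto
    moreover have "lab u \<le> Suc (lab v) \<and> lab v \<le> Suc (lab u)" using edge uv \<open>u \<in> V\<close> \<open>v \<in> V\<close> V_def by auto
    ultimately show "phi P = Suc (phi Q) \<or> phi Q = Suc (phi P)" using ab phicl by auto
  qed
  have wid: "width_le PP W"
    unfolding width_le_def PP_def cl_def V_def using cls by auto
  show ?thesis unfolding has_path_partition_width_def is_path_partition_def
    using part inj adj wid by blast
qed

lemma fan_label:
  fixes G' :: graph
  assumes fan: "has_fan_partition G' a b" and fin: "finite (verts G')" and bpos: "b \<ge> 0"
  shows "\<exists>P mu. P \<subseteq> verts G' \<and> real (card P) \<le> a \<and>
    (\<forall>x y. {x,y} \<in> edges G' \<longrightarrow> x \<in> verts G' - P \<longrightarrow> y \<in> verts G' - P \<longrightarrow> mu x \<le> Suc (mu y) \<and> mu y \<le> Suc (mu x)) \<and>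
    (\<forall>i. real (card {x \<in> verts G' - P. mu x = i}) \<le> b)"
proof -
  obtain PP P where PP: "is_partition G' PP" "P \<in> PP" "real (card P) \<le> a"
     "is_path_partition (del_verts G' P) (PP - {P})" "width_le (PP - {P}) b"
    using fan unfolding has_fan_partition_def by blast
  define QQ where "QQ = PP - {P}"
  have "\<exists>phi. inj_on phi QQ \<and> (\<forall>A\<in>QQ. \<forall>B\<in>QQ. parts_adjacent (del_verts G' P) A B \<longrightarrow> phi A = Suc (phi B) \<or> phi B = Suc (phi A))"
    using PP(4) unfolding QQ_def is_path_partition_def by (rule conjunct2)
  then obtain phi where phi: "inj_on phi QQ" and adj0: "\<forall>A\<in>QQ. \<forall>B\<in>QQ. parts_adjacent (del_verts G' P) A B \<longrightarrow> phi A = Suc (phi B) \<or> phi B = Suc (phi A)"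
    by blast
  have adj: "\<And>A B. A \<in> QQ \<Longrightarrow> B \<in> QQ \<Longrightarrow> parts_adjacent (del_verts G' P) A B \<Longrightarrow> phi A = Suc (phi B) \<or> phi B = Suc (phi A)"
    using adj0 by blast
  have qpart: "is_partition (del_verts G' P) QQ" using PP(4) unfolding QQ_def is_path_partition_def by (rule conjunct1)
  have unQ: "\<Union>QQ = verts G' - P" using qpart unfolding is_partition_def by simp
  have disjQ: "\<And>A B. A \<in> QQ \<Longrightarrow> B \<in> QQ \<Longrightarrow> A \<noteq> B \<Longrightarrow> A \<inter> B = {}" using qpart unfolding is_partition_def by blast
  have Psub: "P \<subseteq> verts G'" using PP(1,2) unfolding is_partition_def by blast
  define part where "part x = (THE Q. Q \<in> QQ \<and> x \<in> Q)" for x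
  have partI: "part x \<in> QQ \<and> x \<in> part x" if "x \<in> verts G' - P" for x
  proof -
    have "x \<in> \<Union>QQ" using that unQ by simp
    then obtain Q where Q: "Q \<in> QQ" "x \<in> Q" by (rule UnionE)
    have uq: "Q' = Q" if "Q' \<in> QQ \<and> x \<in> Q'" for Q'
    proof (rule ccontr)
      assume "Q' \<noteq> Q"
      then have "Q' \<inter> Q = {}" using disjQ that Q(1) by simp
      then show False using that Q(2) by auto
    qed
    have "part x = Q" unfolding part_def
    proof (rule the_equality)
      show "Q \<in> QQ \<and> x \<in> Q" using Q by simp
    next
      fix Q' assume "Q' \<in> QQ \<and> x \<in> Q'" then show "Q' = Q" by (rule uq)
    qed
    then show ?thesis using Q by simp
  qed
  define mu where "mu x = phi (part x)" for x
  have e: "mu x \<le> Suc (mu y) \<and> mu y \<le> Suc (mu x)"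
    if "{x,y} \<in> edges G'" "x \<in> verts G' - P" "y \<in> verts G' - P" for x y
  proof (cases "part x = part y")
    case True then show ?thesis unfolding mu_def by simp
  next
    case False
    have ed: "{x,y} \<in> edges (del_verts G' P)" using that by simp
    have px: "part x \<in> QQ" "x \<in> part x" using partI[OF that(2)] by auto
    have py: "part y \<in> QQ" "y \<in> part y" using partI[OF that(3)] by auto
    have "parts_adjacent (del_verts G' P) (part x) (part y)"
      unfolding parts_adjacent_def using False px(2) py(2) ed by blast
    from adj[OF px(1) py(1) this] show ?thesis unfolding mu_def by auto
  qed
  have c: "real (card {x \<in> verts G' - P. mu x = i}) \<le> b" for i
  proof (cases "{x \<in> verts G' - P. mu x = i} = {}")
    case True
    show ?thesis using bpos by (simp only: True card.empty of_nat_0)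
  next
    case False
    then obtain x0 where x0: "x0 \<in> verts G' - P" "mu x0 = i" by auto
    have sub: "{x \<in> verts G' - P. mu x = i} \<subseteq> part x0"
    proof
      fix x assume x: "x \<in> {x \<in> verts G' - P. mu x = i}"
      then have "phi (part x) = phi (part x0)" using x0 unfolding mu_def by simp
      moreover have "part x \<in> QQ" "part x0 \<in> QQ" using partI x x0(1) by auto
      ultimately have "part x = part x0" using inj_onD[OF phi] by blast
      then show "x \<in> part x0" using partI x by auto
    qed
    have "part x0 \<subseteq> \<Union>QQ" using partI[OF x0(1)] by (rule conjE) (rule Union_upper)
    then have "part x0 \<subseteq> verts G'" using unQ by auto
    then have "finite (part x0)" using fin by (rule finite_subset)
    then have "card {x \<in> verts G' - P. mu x = i} \<le> card (part x0)" using sub card_mono by blast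
    moreover have "real (card (part x0)) \<le> b" using PP(5) partI[OF x0(1)] unfolding width_le_def QQ_def by blast
    ultimately show ?thesis by linarith
  qed
  show ?thesis using Psub PP(3) e c by blast
qed



lemma mainlemma:
  fixes k n :: nat and w :: real and f g :: "nat \<Rightarrow> real"
    and H :: "graph \<Rightarrow> bool" and G :: graph
    and VS :: "'b set" and ES :: "'b set set" and r :: 'b and B :: "'b \<Rightarrow> nat set"
  assumes "k \<ge> 1" and "n \<ge> 1" and "w > 0"
    and "pos_increasing f" and "pos_increasing g"
    and "graph_class H"
    and "admits_fan_partitions (hat_class H) f g"
    and "is_graph G" and "card (verts G) = n"
    and "is_star_decomposition G VS ES r B"
    and "adhesion_le ES B k"
    and "H (torso G ES B r)"
    and "\<forall>s \<in> VS - {r}. real (card (B s - B r)) \<le> w"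
  shows "\<exists>X \<subseteq> verts G. real (card X) \<le> f (k * n) \<and>
           has_path_partition_width (del_verts G X) (max (2 * g (k * n)) w)"
proof -
  define V where "V = verts G"
  define R where "R = B r"
  have finV: "finite V" using assms(8) unfolding is_graph_def V_def by simp
  have star: "is_star VS ES r" and td: "is_tree_decomposition G VS ES B"
    using assms(10) unfolding is_star_decomposition_def by auto
  have rVS: "r \<in> VS" and ESdef: "ES = {{r, s} | s. s \<in> VS \<and> s \<noteq> r}"
    using star unfolding is_star_def by auto
  have bagsub: "\<And>t. t \<in> VS \<Longrightarrow> B t \<subseteq> V" using td unfolding is_tree_decomposition_def V_def by auto
  have cover: "\<And>v. v \<in> V \<Longrightarrow> \<exists>t\<in>VS. v \<in> B t" using td unfolding is_tree_decomposition_def V_def by auto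
  have conn: "\<And>v. v \<in> V \<Longrightarrow> connected_in ES {t \<in> VS. v \<in> B t}"
    using td unfolding is_tree_decomposition_def V_def by auto
  have edgebag: "\<And>e. e \<in> edges G \<Longrightarrow> \<exists>t\<in>VS. e \<subseteq> B t" using td unfolding is_tree_decomposition_def by auto
  have edgeshape: "\<And>e. e \<in> edges G \<Longrightarrow> \<exists>u v. e = {u,v} \<and> u \<noteq> v \<and> u \<in> V \<and> v \<in> V"
    using assms(8) unfolding is_graph_def V_def by auto
  have RV: "R \<subseteq> V" using bagsub rVS R_def by auto
  have finR: "finite R" using RV finV finite_subset by auto
  have ESr: "\<And>s. s \<in> VS \<Longrightarrow> s \<noteq> r \<Longrightarrow> {r,s} \<in> ES" using ESdef by auto
  have uniq0: "s = s'" if "s \<in> VS" "s' \<in> VS" "v \<in> B s" "v \<in> B s'" "v \<notin> R" for v s s'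
  proof -
    have vV: "v \<in> V" using bagsub that by auto
    define S where "S = {t \<in> VS. v \<in> B t}"
    have rS: "r \<notin> S" using that(5) unfolding S_def R_def by auto
    have "connected_in ES S" using conn[OF vV] unfolding S_def .
    then have rt: "(\<lambda>a b. a \<in> S \<and> b \<in> S \<and> {a, b} \<in> ES)\<^sup>*\<^sup>* s s'"
      unfolding connected_in_def using that unfolding S_def by auto
    have norel: "\<not> (a \<in> S \<and> b \<in> S \<and> {a, b} \<in> ES)" for a b
    proof
      assume h: "a \<in> S \<and> b \<in> S \<and> {a, b} \<in> ES"
      then obtain s0 where "{a,b} = {r,s0}" using ESdef by auto
      then have "r = a \<or> r = b" by (auto simp: doubleton_eq_iff)
      then show False using h rS by auto
    qed
    from rt show "s = s'"
      by (rule converse_rtranclpE) (use norel in auto)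
  qed
  define sd where "sd d = (SOME t. t \<in> VS \<and> d \<in> B t)" for d
  have sd: "sd d \<in> VS \<and> d \<in> B (sd d)" if "d \<in> V" for d
  proof -
    have "\<exists>t. t \<in> VS \<and> d \<in> B t" using cover[OF that] by auto
    then show ?thesis unfolding sd_def by (rule someI_ex)
  qed
  have sdr: "sd d \<noteq> r" if "d \<in> V - R" for d using sd[of d] that R_def by auto
  have sduniq: "t = sd d" if "d \<in> V - R" "t \<in> VS" "d \<in> B t" for d t
    using uniq0[of t "sd d" d] sd[of d] that by auto
  define C where "C d = R \<inter> B (sd d)" for d
  define D where "D d = B (sd d) - R" for d
  have cardC: "card (C d) \<le> k" if "d \<in> V - R" for d
  proof -
    have "{r, sd d} \<in> ES" using ESr sd sdr that by auto
    then show ?thesis using assms(11) unfolding adhesion_le_def C_def R_def by blast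
  qed
  have finC: "finite (C d)" for d using finR unfolding C_def by auto
  have CR: "C d \<subseteq> R" for d unfolding C_def by auto
  have Dw: "real (card (D d)) \<le> w" if "d \<in> V - R" for d
    using assms(13) sd[of d] sdr[of d] that unfolding D_def R_def by auto
  have dD: "d \<in> D d" if "d \<in> V - R" for d using sd[of d] that unfolding D_def by auto
  have finD: "finite (D d)" if "d \<in> V - R" for d
    using bagsub[of "sd d"] sd[of d] that finV finite_subset unfolding D_def by blast
  have Dsame: "sd d' = sd d" if "d \<in> V - R" "d' \<in> D d" for d d'
  proof -
    have "d' \<in> V - R" using that bagsub[of "sd d"] sd[of d] unfolding D_def by auto
    then show ?thesis using sduniq[of d' "sd d"] sd[of d] that unfolding D_def by auto
  qed
  have edgeD: "y \<in> B (sd x)" if e1: "{x,y} \<in> edges G" and x1: "x \<in> V - R" for x y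
  proof -
    obtain t where t: "t \<in> VS" "{x,y} \<subseteq> B t" using edgebag[OF e1] by auto
    then have "t = sd x" using sduniq[of x t] x1 by auto
    then show ?thesis using t by auto
  qed
  define T where "T = snd (torso G ES B r)"
  have torso_eq: "torso G ES B r = (R, T)" unfolding T_def R_def torso_def by simp
  have Tedge1: "{u,v} \<in> T" if "{u,v} \<in> edges G" "u \<in> R" "v \<in> R" for u v
    using that unfolding T_def torso_def R_def by simp
  have Tedge2: "{u,v} \<in> T" if "d \<in> V - R" "u \<in> C d" "v \<in> C d" "u \<noteq> v" for d u v
  proof -
    have "{r, sd d} \<in> ES" using ESr sd sdr that by auto
    then show ?thesis using that unfolding T_def torso_def C_def R_def by auto
  qed
  have Tshape: "\<exists>u v. e = {u,v} \<and> u \<noteq> v \<and> u \<in> R \<and> v \<in> R" if "e \<in> T" for e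
  proof -
    have "(e \<in> edges G \<and> e \<subseteq> R) \<or> (\<exists>u v. e = {u,v} \<and> u \<noteq> v \<and> u \<in> R \<and> v \<in> R)"
      using that unfolding T_def torso_def R_def by auto
    then show ?thesis
    proof
      assume "e \<in> edges G \<and> e \<subseteq> R"
      then show ?thesis using edgeshape[of e] by auto
    qed simp
  qed
  define M where "M = Suc (Max (insert 0 V))"
  have ltM: "x < M" if "x \<in> V" for x
    using finV that unfolding M_def by (simp add: le_imp_less_Suc)
  define z where "z p = M + prod_encode p" for p
  have zge: "M \<le> z p" for p unfolding z_def by simp
  have zinj: "z p = z q \<longleftrightarrow> p = q" for p q
    unfolding z_def using prod_encode_eq by auto
  define Zs where "Zs = (SIGMA d:(V - R). C d)"
  define ZZ where "ZZ = z ` Zs"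
  define V' where "V' = R \<union> ZZ"
  define E' where "E' = T \<union> (\<lambda>p. {snd p, z p}) ` Zs"
  define G' where "G' = (V', E')"
  have vG': "verts G' = V'" and eG': "edges G' = E'" unfolding G'_def verts_def edges_def by simp_all
  have RnotZ: "x \<notin> ZZ" if "x \<in> R" for x
  proof
    assume "x \<in> ZZ"
    then obtain p where "x = z p" unfolding ZZ_def by auto
    then have "M \<le> x" using zge by simp
    moreover have "x < M" using ltM RV that by auto
    ultimately show False by simp
  qed
  have finZs: "finite Zs" unfolding Zs_def using finV finC by auto
  have Zs_snd: "snd p \<in> R" if "p \<in> Zs" for p using that unfolding Zs_def C_def by (cases p) auto
  have finV': "finite V'" unfolding V'_def ZZ_def using finR finZs by auto
  have cardZs: "card Zs \<le> k * card (V - R)"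
  proof -
    have "card Zs = (\<Sum>d\<in>V - R. card (C d))" unfolding Zs_def
      using finV finC by (simp add: card_SigmaI)
    also have "\<dots> \<le> (\<Sum>d\<in>V - R. k)" using cardC by (intro sum_mono) auto
    also have "\<dots> = k * card (V - R)" by simp
    finally show ?thesis .
  qed
  have cardV': "card V' = card R + card Zs"
  proof -
    have "inj_on z Zs" using zinj unfolding inj_on_def by auto
    then have "card ZZ = card Zs" unfolding ZZ_def by (rule card_image)
    moreover have "R \<inter> ZZ = {}" using RnotZ by auto
    moreover have "finite ZZ" unfolding ZZ_def using finZs by auto
    ultimately show ?thesis unfolding V'_def using finR card_Un_disjoint by metis
  qed
  have cardV'kn: "card V' \<le> k * n"
  proof -
    have cVR: "card (V - R) = card V - card R" using card_Diff_subset[OF finR RV] .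
    have cRV: "card R \<le> card V" using card_mono[OF finV RV] .
    have sumn: "card R + card (V - R) = n" using cVR cRV assms(9) V_def by simp
    have "card R \<le> k * card R" using assms(1) by simp
    then have "card R + k * card (V - R) \<le> k * card R + k * card (V - R)" by simp
    also have "\<dots> = k * (card R + card (V - R))" by (simp add: add_mult_distrib2)
    also have "\<dots> = k * n" using sumn by simp
    finally have "card R + k * card (V - R) \<le> k * n" .
    then show ?thesis using cardV' cardZs by linarith
  qed
  have isG': "is_graph G'"
    unfolding is_graph_def vG' eG'
  proof (intro conjI ballI)
    show "finite V'" by (rule finV')
  next
    fix e assume "e \<in> E'"
    then consider "e \<in> T" | p where "p \<in> Zs" "e = {snd p, z p}" unfolding E'_def by auto
    then show "\<exists>u v. e = {u, v} \<and> u \<noteq> v \<and> u \<in> V' \<and> v \<in> V'"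
    proof cases
      case 1
      then obtain u v where "e = {u,v}" "u \<noteq> v" "u \<in> R" "v \<in> R" using Tshape[of e] by blast
      then show ?thesis unfolding V'_def by auto
    next
      case 2
      have "snd p \<in> R" using Zs_snd 2 by auto
      moreover have "z p \<in> ZZ" using 2 unfolding ZZ_def by auto
      moreover have "snd p \<noteq> z p" using RnotZ calculation by metis
      ultimately show ?thesis using 2 unfolding V'_def by auto
    qed
  qed
  have deg: "degree G' q = 1" if qZ: "q \<in> ZZ" for q
  proof -
    obtain p where p: "p \<in> Zs" "q = z p" using qZ unfolding ZZ_def by auto
    have qR: "q \<notin> R" using RnotZ qZ by auto
    have "{u \<in> V'. {q, u} \<in> E'} = {snd p}"
    proof (intro equalityI subsetI)
      fix u assume u: "u \<in> {u \<in> V'. {q, u} \<in> E'}"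
      then have "{q,u} \<in> T \<or> (\<exists>p'\<in>Zs. {q,u} = {snd p', z p'})" unfolding E'_def by auto
      then show "u \<in> {snd p}"
      proof
        assume "{q,u} \<in> T"
        then obtain a b where "{q,u} = {a,b}" "a \<in> R" "b \<in> R" using Tshape by blast
        then have "q \<in> R" by (auto simp: doubleton_eq_iff)
        then show ?thesis using qR by simp
      next
        assume "\<exists>p'\<in>Zs. {q,u} = {snd p', z p'}"
        then obtain p' where p': "p' \<in> Zs" "{q,u} = {snd p', z p'}" by blast
        have "q \<noteq> snd p'" using Zs_snd[OF p'(1)] qR by auto
        then have "q = z p' \<and> u = snd p'" using p'(2) by (auto simp: doubleton_eq_iff)
        then show ?thesis using p zinj by auto
      qed
    next
      fix u assume "u \<in> {snd p}"
      then have "u = snd p" by simp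
      moreover have "snd p \<in> V'" using Zs_snd p(1) unfolding V'_def by auto
      moreover have "{q, snd p} \<in> E'" unfolding E'_def using p by (auto simp: insert_commute)
      ultimately show "u \<in> {u \<in> V'. {q, u} \<in> E'}" by simp
    qed
    then show ?thesis unfolding degree_def vG' eG' by simp
  qed
  have delZ: "del_verts G' ZZ = torso G ES B r"
  proof -
    have "V' - ZZ = R" unfolding V'_def using RnotZ by auto
    moreover have "{e \<in> E'. e \<inter> ZZ = {}} = T"
    proof (intro equalityI subsetI)
      fix e assume "e \<in> {e \<in> E'. e \<inter> ZZ = {}}"
      then have e: "e \<in> E'" "e \<inter> ZZ = {}" by auto
      show "e \<in> T"
      proof (rule ccontr)
        assume "e \<notin> T"
        then obtain p where "p \<in> Zs" "e = {snd p, z p}" using e(1) unfolding E'_def by auto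
        then have "z p \<in> e \<inter> ZZ" unfolding ZZ_def by auto
        then show False using e(2) by auto
      qed
    next
      fix e assume "e \<in> T"
      then obtain a b where "e = {a,b}" "a \<in> R" "b \<in> R" using Tshape by blast
      then show "e \<in> {e \<in> E'. e \<inter> ZZ = {}}" using \<open>e \<in> T\<close> RnotZ unfolding E'_def by auto
    qed
    ultimately show ?thesis unfolding torso_eq del_verts_def G'_def verts_def edges_def by simp
  qed
  have hatG': "hat_class H G'"
    unfolding hat_class_def
  proof (intro conjI exI[of _ ZZ])
    show "is_graph G'" by (rule isG')
    show "ZZ \<subseteq> verts G'" unfolding vG' V'_def by auto
    show "\<forall>z\<in>ZZ. degree G' z = 1" using deg by auto
    show "H (del_verts G' ZZ)" using delZ assms(12) by simp
  qed
  have knpos: "1 \<le> k * n" using assms(1,2) by simp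
  have gpos: "g (k * n) > 0" using assms(5) knpos unfolding pos_increasing_def by auto
  have fpos: "f (k * n) > 0" using assms(4) knpos unfolding pos_increasing_def by auto
  obtain P mu where P: "P \<subseteq> V'" "real (card P) \<le> f (k * n)"
    and mue: "\<And>x y. {x,y} \<in> E' \<Longrightarrow> x \<in> V' - P \<Longrightarrow> y \<in> V' - P \<Longrightarrow> mu x \<le> Suc (mu y) \<and> mu y \<le> Suc (mu x)"
    and muc: "\<And>i. real (card {x \<in> V' - P. mu x = i}) \<le> g (k * n)"
  proof (cases "V' = {}")
    case True
    show ?thesis
      by (rule that[of "{}" "\<lambda>_. 0"]) (use True fpos gpos in auto)
  next
    case False
    then have c1: "1 \<le> card V'" using finV' by (simp add: Suc_leI card_gt_0_iff)
    have adm: "\<And>G0. hat_class H G0 \<Longrightarrow> 1 \<le> card (verts G0) \<Longrightarrow> has_fan_partition G0 (f (card (verts G0))) (g (card (verts G0)))"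
      using assms(7) unfolding admits_fan_partitions_def by blast
    have hf: "has_fan_partition G' (f (card V')) (g (card V'))"
      using adm[OF hatG'] c1 unfolding vG' by simp
    have g0: "g (card V') \<ge> 0" using assms(5) c1 unfolding pos_increasing_def by (simp add: less_imp_le)
    have finG': "finite (verts G')" using finV' vG' by simp
    have ex: "\<exists>P mu. P \<subseteq> verts G' \<and> real (card P) \<le> f (card V') \<and>
      (\<forall>x y. {x,y} \<in> edges G' \<longrightarrow> x \<in> verts G' - P \<longrightarrow> y \<in> verts G' - P \<longrightarrow> mu x \<le> Suc (mu y) \<and> mu y \<le> Suc (mu x)) \<and>
      (\<forall>i. real (card {x \<in> verts G' - P. mu x = i}) \<le> g (card V'))"
      by (rule fan_label[OF hf finG' g0])
    then obtain P mu where Pm: "P \<subseteq> verts G' \<and> real (card P) \<le> f (card V') \<and>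
      (\<forall>x y. {x,y} \<in> edges G' \<longrightarrow> x \<in> verts G' - P \<longrightarrow> y \<in> verts G' - P \<longrightarrow> mu x \<le> Suc (mu y) \<and> mu y \<le> Suc (mu x)) \<and>
      (\<forall>i. real (card {x \<in> verts G' - P. mu x = i}) \<le> g (card V'))"
      by (elim exE)
    have fm: "f (card V') \<le> f (k * n)" using pos_inc_mono[OF assms(4) c1 cardV'kn] .
    have gm: "g (card V') \<le> g (k * n)" using pos_inc_mono[OF assms(5) c1 cardV'kn] .
    show ?thesis
    proof (rule that[of P mu])
      show "P \<subseteq> V'" using Pm vG' by simp
      have "real (card P) \<le> f (card V')" using Pm by simp
      then show "real (card P) \<le> f (k * n)" using fm by linarith
      fix x y assume "{x,y} \<in> E'" "x \<in> V' - P" "y \<in> V' - P"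
      then show "mu x \<le> Suc (mu y) \<and> mu y \<le> Suc (mu x)" using Pm unfolding vG' eG' by blast
    next
      fix i
      have "real (card {x \<in> V' - P. mu x = i}) \<le> g (card V')" using Pm unfolding vG' by blast
      then show "real (card {x \<in> V' - P. mu x = i}) \<le> g (k * n)" using gm by linarith
    qed
  qed
  have finP: "finite P" using P(1) finV' finite_subset by blast
  define A where "A d = (C d - P \<noteq> {})" for d
  define vs where "vs d = (SOME v. v \<in> C d - P)" for d
  have vsI: "vs d \<in> C d - P" if "A d" for d
  proof -
    have "\<exists>v. v \<in> C d - P" using that unfolding A_def by blast
    then show ?thesis unfolding vs_def by (rule someI_ex)
  qed
  have zZZ: "z (d, v) \<in> ZZ" if "d \<in> V - R" "v \<in> C d" for d v
    using that unfolding ZZ_def Zs_def by blast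
  have pend: "{v, z (d, v)} \<in> E'" if "d \<in> V - R" "v \<in> C d" for d v
    using that unfolding E'_def Zs_def by force
  define X where "X = (P \<inter> R) \<union> {d \<in> V - R. A d \<and> z (d, vs d) \<in> P}"
  define Big where "Big = Suc (Suc (Max (insert 0 (mu ` V'))))"
  define lab where "lab x = (if x \<in> R then mu x div 2 else if A x then mu (z (x, vs x)) div 2
                             else Big + 2 * Min (D x))" for x
  define emb where "emb x = (if x \<in> R then x else z (x, vs x))" for x
  have XV: "X \<subseteq> V" unfolding X_def using RV by blast
  have embinj: "inj_on emb V"
  proof (rule inj_onI)
    fix x y assume xy: "x \<in> V" "y \<in> V" "emb x = emb y"
    show "x = y"
    proof (cases "x \<in> R"; cases "y \<in> R")
      assume "x \<in> R" "y \<in> R" then show ?thesis using xy unfolding emb_def by simp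
    next
      assume h: "x \<in> R" "y \<notin> R"
      then have "x = z (y, vs y)" using xy unfolding emb_def by simp
      then show ?thesis using zge[of "(y, vs y)"] ltM xy(1) by fastforce
    next
      assume h: "x \<notin> R" "y \<in> R"
      then have "y = z (x, vs x)" using xy unfolding emb_def by simp
      then show ?thesis using zge[of "(x, vs x)"] ltM xy(2) by fastforce
    next
      assume h: "x \<notin> R" "y \<notin> R"
      then have "z (x, vs x) = z (y, vs y)" using xy unfolding emb_def by simp
      then show ?thesis using zinj by simp
    qed
  qed
  have embP: "emb ` X \<subseteq> P"
    unfolding X_def emb_def by auto
  have cardX: "card X \<le> card P"
  proof -
    have "inj_on emb X" using embinj XV inj_on_subset by blast
    then show ?thesis using card_inj_on_le[OF _ embP finP] by blast
  qed
  have embgood: "emb x \<in> V' - P \<and> lab x = mu (emb x) div 2"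
    if "x \<in> V - X" "x \<in> R \<or> A x" for x
  proof (cases "x \<in> R")
    case True
    then show ?thesis using that unfolding emb_def lab_def X_def V'_def by auto
  next
    case False
    then have Ax: "A x" using that by simp
    have "vs x \<in> C x" using vsI[OF Ax] by simp
    then have "z (x, vs x) \<in> ZZ" using zZZ[of x "vs x"] that False by simp
    moreover have "z (x, vs x) \<notin> P" using that False Ax unfolding X_def by auto
    ultimately show ?thesis using False Ax unfolding emb_def lab_def V'_def by auto
  qed
  have close2: "lab x \<le> Suc (lab y) \<and> lab y \<le> Suc (lab x)"
    if "mu a \<le> mu b + 2" "mu b \<le> mu a + 2" "lab x = mu a div 2" "lab y = mu b div 2" for x y a b
    using div2_close[OF that(1,2)] that(3,4) by simp
  have mue': "mu a \<le> mu b + 2 \<and> mu b \<le> mu a + 2" if "{a,b} \<in> E'" "a \<in> V' - P" "b \<in> V' - P" for a b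
    using mue[OF that] by simp
  have key: "lab x \<le> Suc (lab y) \<and> lab y \<le> Suc (lab x)"
    if exy: "{x,y} \<in> edges G" and xX: "x \<in> V - X" and yX: "y \<in> V - X" and ord: "x \<in> R \<or> y \<notin> R" for x y
  proof (cases "x \<in> R")
    case xR: True
    show ?thesis
    proof (cases "y \<in> R")
      case True
      have exE: "{x,y} \<in> E'" using Tedge1[OF exy xR True] unfolding E'_def by simp
      have xP: "x \<notin> P" using xX xR unfolding X_def by auto
      have yP: "y \<notin> P" using yX True unfolding X_def by auto
      have xV': "x \<in> V' - P" using xR xP unfolding V'_def by auto
      have yV': "y \<in> V' - P" using True yP unfolding V'_def by auto
      have m: "mu x \<le> mu y + 2 \<and> mu y \<le> mu x + 2" using mue'[OF exE xV' yV'] .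
      have "lab x = mu x div 2" "lab y = mu y div 2" using xR True unfolding lab_def by auto
      then show ?thesis using div2_close[of "mu x" "mu y"] m by simp
    next
      case False
      have yVR: "y \<in> V - R" using yX False by simp
      have exy': "{y,x} \<in> edges G" using exy by (simp add: insert_commute)
      have xC: "x \<in> C y" using edgeD[OF exy' yVR] xR unfolding C_def by simp
      have xP: "x \<notin> P" using xX xR unfolding X_def by auto
      have Ay: "A y" using xC xP unfolding A_def by blast
      define v where "v = vs y"
      have v: "v \<in> C y" "v \<notin> P" using vsI[OF Ay] v_def by auto
      have q: "z (y, v) \<in> V' - P" using embgood[of y] yX Ay False unfolding emb_def v_def by auto
      have vV': "v \<in> V' - P" using v CR unfolding V'_def by auto
      have xV': "x \<in> V' - P" using xR xP unfolding V'_def by auto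
      have m1: "mu v \<le> mu (z (y,v)) + 2 \<and> mu (z (y,v)) \<le> mu v + 2"
        using mue[OF pend[OF yVR v(1)] vV' q] by simp
      have m2: "mu x \<le> mu v + 1 \<and> mu v \<le> mu x + 1"
      proof (cases "x = v")
        case True then show ?thesis by simp
      next
        case False
        have "{x,v} \<in> E'" using Tedge2[OF yVR xC v(1) False] unfolding E'_def by simp
        then show ?thesis using mue[OF _ xV' vV'] by simp
      qed
      have m3: "mu (z (y,v)) \<le> Suc (mu v) \<and> mu v \<le> Suc (mu (z (y,v)))"
        using mue[OF pend[OF yVR v(1)] vV' q] by simp
      have "lab y = mu (z (y, v)) div 2" using embgood[of y] yX Ay False unfolding emb_def v_def by auto
      moreover have "lab x = mu x div 2" using xR unfolding lab_def by simp
      moreover have "mu x \<le> mu (z (y,v)) + 2" "mu (z (y,v)) \<le> mu x + 2" using m2 m3 by linarith+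
      ultimately show ?thesis using div2_close[of "mu x" "mu (z (y,v))"] by simp
    qed
  next
    case xR: False
    then have yR: "y \<notin> R" using ord by simp
    have xVR: "x \<in> V - R" using xX xR by simp
    have yVR: "y \<in> V - R" using yX yR by simp
    have yD: "y \<in> D x" using edgeD[OF exy xVR] yR unfolding D_def by simp
    have same: "sd y = sd x" using Dsame[OF xVR yD] .
    have CD: "C y = C x" "D y = D x" unfolding C_def D_def using same by auto
    then have AA: "A y = A x" and vsvs: "vs y = vs x" unfolding A_def vs_def by auto
    show ?thesis
    proof (cases "A x")
      case True
      define v where "v = vs x"
      have v: "v \<in> C x" "v \<notin> P" using vsI[OF True] v_def by auto
      have vV': "v \<in> V' - P" using v CR unfolding V'_def by auto
      have qx: "z (x, v) \<in> V' - P" using embgood[of x] xX True xR unfolding emb_def v_def by auto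
      have qy: "z (y, v) \<in> V' - P" using embgood[of y] yX True AA vsvs yR unfolding emb_def v_def by auto
      have vCy: "v \<in> C y" using v CD by simp
      have m1: "mu (z (x,v)) \<le> Suc (mu v) \<and> mu v \<le> Suc (mu (z (x,v)))"
        using mue[OF pend[OF xVR v(1)] vV' qx] by simp
      have m2: "mu (z (y,v)) \<le> Suc (mu v) \<and> mu v \<le> Suc (mu (z (y,v)))"
        using mue[OF pend[OF yVR vCy] vV' qy] by simp
      have "lab x = mu (z (x, v)) div 2" using xR True unfolding lab_def v_def by simp
      moreover have "lab y = mu (z (y, v)) div 2" using yR True AA vsvs unfolding lab_def v_def by simp
      moreover have "mu (z (x,v)) \<le> mu (z (y,v)) + 2" "mu (z (y,v)) \<le> mu (z (x,v)) + 2" using m1 m2 by linarith+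
      ultimately show ?thesis using div2_close[of "mu (z (x,v))" "mu (z (y,v))"] by simp
    next
      case False
      have "lab x = lab y" using xR yR False AA CD unfolding lab_def by simp
      then show ?thesis by simp
    qed
  qed
  define W where "W = max (2 * g (k * n)) w"
  have Wge: "w \<le> W" "2 * g (k * n) \<le> W" unfolding W_def by auto
  have clsb: "real (card {x \<in> V - X. lab x = i}) \<le> W" for i
  proof -
    define K where "K = {x \<in> V - X. lab x = i}"
    have KV: "K \<subseteq> V" unfolding K_def by auto
    have Kmem: "x \<in> V - X \<and> lab x = i" if "x \<in> K" for x using that unfolding K_def by simp
    have "real (card K) \<le> W"
    proof (cases "\<exists>x0\<in>K. x0 \<notin> R \<and> \<not> A x0")
      case True
      then obtain x0 where x0: "x0 \<in> K" "x0 \<notin> R" "\<not> A x0" by auto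
      have x0VR: "x0 \<in> V - R" using Kmem[OF x0(1)] x0(2) by simp
      have "lab x0 = Big + 2 * Min (D x0)" using x0(2,3) unfolding lab_def by simp
      then have i0: "i = Big + 2 * Min (D x0)" using Kmem[OF x0(1)] by simp
      have KD: "K \<subseteq> D x0"
      proof
        fix x assume xK: "x \<in> K"
        show "x \<in> D x0"
        proof (cases "x \<in> R \<or> A x")
          case True
          have xVX: "x \<in> V - X" using Kmem[OF xK] by simp
          have eg: "emb x \<in> V' - P" "lab x = mu (emb x) div 2" using embgood[OF xVX True] by auto
          have "mu (emb x) \<in> mu ` V'" using eg(1) by auto
          then have "mu (emb x) \<le> Max (insert 0 (mu ` V'))" using finV' by (intro Max_ge) auto
          then have "lab x < Big" using eg(2) unfolding Big_def by linarith
          moreover have "lab x = i" using Kmem[OF xK] by simp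
          ultimately show ?thesis using i0 by simp
        next
          case False
          have xVR: "x \<in> V - R" using Kmem[OF xK] False by simp
          have "lab x = Big + 2 * Min (D x)" using False unfolding lab_def by simp
          then have mm: "Min (D x) = Min (D x0)" using Kmem[OF xK] i0 by simp
          have "Min (D x) \<in> D x" using finD[OF xVR] dD[OF xVR] by (intro Min_in) auto
          then have s1: "sd (Min (D x)) = sd x" using Dsame[OF xVR] by simp
          have "Min (D x0) \<in> D x0" using finD[OF x0VR] dD[OF x0VR] by (intro Min_in) auto
          then have s2: "sd (Min (D x0)) = sd x0" using Dsame[OF x0VR] by simp
          have "sd x = sd x0" using s1 s2 mm by simp
          then show ?thesis using dD[OF xVR] unfolding D_def by simp
        qed
      qed
      have "card K \<le> card (D x0)" using card_mono[OF finD[OF x0VR] KD] .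
      then have "real (card K) \<le> w" using Dw[OF x0VR] by linarith
      then show ?thesis using Wge by linarith
    next
      case False
      have allg: "x \<in> R \<or> A x" if "x \<in> K" for x using that False by auto
      define S1 where "S1 = {q \<in> V' - P. mu q = 2 * i}"
      define S2 where "S2 = {q \<in> V' - P. mu q = Suc (2 * i)}"
      have sub: "emb ` K \<subseteq> S1 \<union> S2"
      proof
        fix q assume "q \<in> emb ` K"
        then obtain x where x: "x \<in> K" "q = emb x" by auto
        have xVX: "x \<in> V - X" using Kmem[OF x(1)] by simp
        have eg: "emb x \<in> V' - P" "lab x = mu (emb x) div 2" using embgood[OF xVX allg[OF x(1)]] by auto
        have "mu (emb x) div 2 = i" using eg(2) Kmem[OF x(1)] by simp
        then have "mu (emb x) = 2 * i \<or> mu (emb x) = Suc (2 * i)" by linarith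
        then show "q \<in> S1 \<union> S2" using eg(1) x(2) unfolding S1_def S2_def by auto
      qed
      have injK: "inj_on emb K" using inj_on_subset[OF embinj KV] .
      have finS: "finite (S1 \<union> S2)"
      proof -
        have "S1 \<union> S2 \<subseteq> V'" unfolding S1_def S2_def by auto
        then show ?thesis using finV' by (rule finite_subset)
      qed
      have "card K = card (emb ` K)" using card_image[OF injK] by simp
      also have "\<dots> \<le> card (S1 \<union> S2)" using card_mono[OF finS sub] .
      also have "\<dots> \<le> card S1 + card S2" by (rule card_Un_le)
      finally have "real (card K) \<le> real (card S1) + real (card S2)" by linarith
      moreover have "real (card S1) \<le> g (k * n)" using muc[of "2*i"] unfolding S1_def .
      moreover have "real (card S2) \<le> g (k * n)" using muc[of "Suc (2*i)"] unfolding S2_def .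
      ultimately show ?thesis using Wge by linarith
    qed
    then show ?thesis unfolding K_def .
  qed
  have pp: "has_path_partition_width (del_verts G X) W"
  proof (rule label_pp[where lab = lab])
    fix x y assume e: "{x,y} \<in> edges (del_verts G X)" "x \<in> verts (del_verts G X)" "y \<in> verts (del_verts G X)"
    have exy: "{x,y} \<in> edges G" using e(1) by simp
    have xX: "x \<in> V - X" and yX: "y \<in> V - X" using e(2,3) unfolding V_def by auto
    show "lab x \<le> Suc (lab y) \<and> lab y \<le> Suc (lab x)"
    proof (cases "x \<in> R \<or> y \<notin> R")
      case True then show ?thesis using key[OF exy xX yX] by simp
    next
      case False
      have "{y,x} \<in> edges G" using exy by (simp add: insert_commute)
      then show ?thesis using key[OF _ yX xX] False by auto
    qed
  next
    fix i show "real (card {x \<in> verts (del_verts G X). lab x = i}) \<le> W"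
      using clsb[of i] unfolding V_def by simp
  qed
  show ?thesis
  proof (intro exI[of _ X] conjI)
    show "X \<subseteq> verts G" using XV V_def by simp
    show "real (card X) \<le> f (k * n)" using cardX P(2) by linarith
    show "has_path_partition_width (del_verts G X) (max (2 * g (k * n)) w)" using pp W_def by simp
  qed
qed


theorem mainTheorem6:
  fixes k n :: nat and w :: real and f g :: "nat \<Rightarrow> real"
    and H :: "graph \<Rightarrow> bool" and G :: graph
    and VS :: "'b set" and ES :: "'b set set" and r :: 'b and B :: "'b \<Rightarrow> nat set"
  assumes "k \<ge> 1" and "n \<ge> 1" and "w > 0"
    and "pos_increasing f" and "pos_increasing g"
    and "graph_class H"
    and "admits_fan_partitions (hat_class H) f g"
    and "is_graph G" and "card (verts G) = n"
    and "is_star_decomposition G VS ES r B"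
    and "adhesion_le ES B k"
    and "H (torso G ES B r)"
    and "\<forall>s \<in> VS - {r}. real (card (B s - B r)) \<le> w"
  shows "\<exists>X \<subseteq> verts G. real (card X) \<le> f (k * n) \<and>
           has_path_partition_width (del_verts G X) (max (2 * g (k * n)) w)"
  using assms by (rule mainlemma)

end
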